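(* Let $F$ be a probability distribution on the non-negative integers. In the Coin Toss (CT) model with degree distribution $F$, the total length $T$ of all edges at the origin satisfies $\mathbb{E}[T]<\infty$ if and only if $F$ has bounded support.
   Context: CT model: independently for each $i\in\mathbb{Z}$ let $D_i\sim F$, and attach $D_i$ stubs $s_{i,1},\dots,s_{i,D_i}$ to vertex $i$. For $j\ge1$ let $\Gamma_j=\{i\in\mathbb{Z}:D_i\ge j\}$; the stubs $s_{i,j}$, $i\in\Gamma_j$, form level $j$. For each level $j$ separately (with independent fair coin tosses, independent of the degrees) the level-$j$ stubs are given directions so that along $\Gamma_j$ (in increasing order) the directions alternate right, left, right, left, \dots, the direction of the stub at the first vertex $i\ge 0$ of $\Gamma_j$ being right or left according to a fair coin. A level-$j$ stub at $i$ pointing right (left) is joined to the level-$j$ stub at the $(2j-1)$-th vertex of $\Gamma_j$ to the right (left) of $i$, producing an edge. The length of an edge $\{i,k\}$ is $|i-k|$, and $T$ is the total length of all edges at vertex $0$. *)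

theory Defs
  imports "HOL-Probability.Probability"
begin

text \<open>A configuration is a pair (D, C): the degrees
D :: int \<Rightarrow> nat and the coin tosses C :: nat \<Rightarrow> bool, where C j = True means
that at level j the stub at the first vertex i \<ge> 0 of Gamma_j points right
(C 0 is unused).\<close>

definition Gamma :: "(int \<Rightarrow> nat) \<Rightarrow> nat \<Rightarrow> int set" where
  "Gamma D j = {i. D i \<ge> j}"

definition kth_right :: "int set \<Rightarrow> int \<Rightarrow> nat \<Rightarrow> int option" where
  "kth_right S i k =
     (if \<exists>x. x \<in> S \<and> i < x \<and> card {y \<in> S. i < y \<and> y < x} = k - 1
      then Some (THE x. x \<in> S \<and> i < x \<and> card {y \<in> S. i < y \<and> y < x} = k - 1)
      else None)"

definition kth_left :: "int set \<Rightarrow> int \<Rightarrow> nat \<Rightarrow> int option" where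
  "kth_left S i k =
     (if \<exists>x. x \<in> S \<and> x < i \<and> card {y \<in> S. x < y \<and> y < i} = k - 1
      then Some (THE x. x \<in> S \<and> x < i \<and> card {y \<in> S. x < y \<and> y < i} = k - 1)
      else None)"

definition first_nonneg :: "int set \<Rightarrow> int" where
  "first_nonneg S = (LEAST x. x \<in> S \<and> 0 \<le> x)"

text \<open>Direction of the level-j stub at vertex i \<in> Gamma_j: directions alternate
along Gamma_j, the stub at the first vertex \<ge> 0 pointing right iff C j.\<close>
definition points_right :: "(int \<Rightarrow> nat) \<Rightarrow> (nat \<Rightarrow> bool) \<Rightarrow> nat \<Rightarrow> int \<Rightarrow> bool" where
  "points_right D C j i =
     (let G = Gamma D j; f = first_nonneg G;
          n = (if f \<le> i then card {y \<in> G. f \<le> y \<and> y < i}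
               else card {y \<in> G. i \<le> y \<and> y < f})
      in (C j \<longleftrightarrow> even n))"

definition partner :: "(int \<Rightarrow> nat) \<Rightarrow> (nat \<Rightarrow> bool) \<Rightarrow> nat \<Rightarrow> int \<Rightarrow> int option" where
  "partner D C j i =
     (if points_right D C j i then kth_right (Gamma D j) i (2 * j - 1)
      else kth_left (Gamma D j) i (2 * j - 1))"

text \<open>Length of the edge containing stub s_{i,j}; \<infinity> if the edge does not exist
(this happens only on a null set).\<close>
definition stub_edge_length :: "(int \<Rightarrow> nat) \<Rightarrow> (nat \<Rightarrow> bool) \<Rightarrow> nat \<Rightarrow> int \<Rightarrow> ennreal" where
  "stub_edge_length D C j i =
     (case partner D C j i of None \<Rightarrow> \<infinity> | Some k \<Rightarrow> ennreal (real_of_int \<bar>i - k\<bar>))"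

text \<open>Total length of all edges at vertex 0: each edge at 0 contains exactly one
of the stubs s_{0,1}, ..., s_{0,D_0} (no loops), so sum over these stubs.\<close>
definition CT_T :: "(int \<Rightarrow> nat) \<times> (nat \<Rightarrow> bool) \<Rightarrow> ennreal" where
  "CT_T \<omega> = (\<Sum>j\<in>{1..fst \<omega> 0}. stub_edge_length (fst \<omega>) (snd \<omega>) j 0)"

definition CT_space :: "nat pmf \<Rightarrow> ((int \<Rightarrow> nat) \<times> (nat \<Rightarrow> bool)) measure" where
  "CT_space F = (\<Pi>\<^sub>M i\<in>(UNIV::int set). measure_pmf F) \<Otimes>\<^sub>M
                (\<Pi>\<^sub>M j\<in>(UNIV::nat set). measure_pmf (bernoulli_pmf (1/2)))"

end

theory Submission
  imports Defs
begin


lemma kr_unique: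
  fixes S :: "int set"
  assumes "x1 \<in> S" "i < x1" "card {y \<in> S. i < y \<and> y < x1} = k"
      and "x2 \<in> S" "i < x2" "card {y \<in> S. i < y \<and> y < x2} = k"
  shows "x1 = x2"
proof (rule ccontr)
  assume ne: "x1 \<noteq> x2"
  { fix a b :: int assume ab: "a \<in> S" "i < a" "b \<in> S" "i < b" "a < b"
    have fin: "finite {y \<in> S. i < y \<and> y < b}"
      by (rule finite_subset[of _ "{i<..<b}"]) auto
    have "insert a {y \<in> S. i < y \<and> y < a} \<subseteq> {y \<in> S. i < y \<and> y < b}" using ab by auto
    hence "card (insert a {y \<in> S. i < y \<and> y < a}) \<le> card {y \<in> S. i < y \<and> y < b}"
      using fin by (rule card_mono[rotated])
    moreover have "card (insert a {y \<in> S. i < y \<and> y < a}) = Suc (card {y \<in> S. i < y \<and> y < a})"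
      by (rule card_insert_disjoint) (auto intro: finite_subset[of _ "{i<..<a}"])
    ultimately have "card {y \<in> S. i < y \<and> y < a} < card {y \<in> S. i < y \<and> y < b}" by simp }
  note * = this
  show False
  proof (cases "x1 < x2")
    case True then show False using *[of x1 x2] assms by simp
  next
    case False then have "x2 < x1" using ne by simp
    then show False using *[of x2 x1] assms by simp
  qed
qed

lemma kr_char:
  "kth_right S i k = Some x \<longleftrightarrow> (x \<in> S \<and> i < x \<and> card {y \<in> S. i < y \<and> y < x} = k - 1)"
proof -
  let ?P = "\<lambda>x. x \<in> S \<and> i < x \<and> card {y \<in> S. i < y \<and> y < x} = k - 1"
  have u: "\<And>x y. ?P x \<Longrightarrow> ?P y \<Longrightarrow> x = y" using kr_unique[of _ S i "k-1"] by blast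
  show ?thesis
  proof
    assume h: "kth_right S i k = Some x"
    then have ex: "\<exists>x. ?P x" unfolding kth_right_def by (auto split: if_splits)
    then have "x = (THE x. ?P x)" using h unfolding kth_right_def by (auto split: if_splits)
    moreover have "?P (THE x. ?P x)"
    proof -
      obtain x0 where "?P x0" using ex by blast
      then show ?thesis by (rule theI) (use u \<open>?P x0\<close> in blast)
    qed
    ultimately show "?P x" by simp
  next
    assume h: "?P x"
    then have "(THE x. ?P x) = x" by (rule the_equality) (use u h in blast)
    then show "kth_right S i k = Some x" using h unfolding kth_right_def by auto
  qed
qed

lemma kl_eq: "kth_left S 0 k = map_option uminus (kth_right (uminus ` S) 0 k)"
proof -
  have c: "card {y \<in> uminus ` S. 0 < y \<and> y < - x} = card {y \<in> S. x < y \<and> y < 0}" for x :: int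
  proof -
    have "{y \<in> uminus ` S. 0 < y \<and> y < - x} = uminus ` {y \<in> S. x < y \<and> y < 0}" by force
    then show ?thesis by (simp add: card_image)
  qed
  have eqv: "(x \<in> S \<and> x < 0 \<and> card {y \<in> S. x < y \<and> y < 0} = k - 1) \<longleftrightarrow>
             kth_right (uminus ` S) 0 k = Some (-x)" for x
    unfolding kr_char c by auto
  show ?thesis
  proof (cases "kth_right (uminus ` S) 0 k")
    case None
    then have "\<not> (\<exists>x. x \<in> S \<and> x < 0 \<and> card {y \<in> S. x < y \<and> y < 0} = k - 1)"
      using eqv by auto
    then show ?thesis using None unfolding kth_left_def by simp
  next
    case (Some z)
    then have P: "(-z) \<in> S \<and> -z < 0 \<and> card {y \<in> S. -z < y \<and> y < 0} = k - 1"
      using eqv[of "-z"] by simp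
    have "(THE x. x \<in> S \<and> x < 0 \<and> card {y \<in> S. x < y \<and> y < 0} = k - 1) = -z"
    proof (rule the_equality)
      show "- z \<in> S \<and> - z < 0 \<and> card {y \<in> S. - z < y \<and> y < 0} = k - 1" by (rule P)
      fix x assume "x \<in> S \<and> x < 0 \<and> card {y \<in> S. x < y \<and> y < 0} = k - 1"
      then have "kth_right (uminus ` S) 0 k = Some (-x)" using eqv by blast
      then show "x = -z" using Some by simp
    qed
    moreover have "\<exists>x. x \<in> S \<and> x < 0 \<and> card {y \<in> S. x < y \<and> y < 0} = k - 1"
      using P by blast
    ultimately show ?thesis using Some unfolding kth_left_def by simp
  qed
qed



lemma exists_kth:
  fixes A :: "'a::linorder set"
  assumes "finite A" "1 \<le> m" "m \<le> card A"
  shows "\<exists>x\<in>A. card {y\<in>A. y < x} = m - 1"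
  using assms
proof (induction "card A - m" arbitrary: A)
  case 0
  then have cA: "card A = m" by simp
  then have ne: "A \<noteq> {}" using 0 by auto
  have "{y\<in>A. y < Max A} = A - {Max A}" using Max_ge[OF 0(2)] by force
  then have "card {y\<in>A. y < Max A} = m - 1" using cA Max_in[OF 0(2) ne] 0(2) by simp
  then show ?case using Max_in[OF 0(2) ne] by blast
next
  case (Suc n)
  then have ne: "A \<noteq> {}" by auto
  let ?B = "A - {Max A}"
  have cB: "card ?B = card A - 1" using Max_in[OF Suc(3) ne] Suc(3) by simp
  have "n = card ?B - m" using Suc(2) cB by simp
  moreover have "m \<le> card ?B" using Suc(2) cB by simp
  ultimately obtain x where x: "x \<in> ?B" "card {y\<in>?B. y < x} = m - 1"
    using Suc(1)[of ?B] Suc(3-5) by blast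
  have "x < Max A" using x(1) Max_ge[OF Suc(3)] by (metis DiffE insertI1 order_le_less)
  then have "{y\<in>?B. y < x} = {y\<in>A. y < x}" by auto
  then show ?case using x by auto
qed

definition Rv :: "int set \<Rightarrow> nat \<Rightarrow> ennreal" where
  "Rv S m = (case kth_right S 0 m of None \<Rightarrow> \<infinity> | Some x \<Rightarrow> ennreal (real_of_int \<bar>0 - x\<bar>))"

lemma block_lemma:
  fixes S :: "int set"
  assumes m: "1 \<le> m" and hit: "\<forall>r<m. \<exists>k\<in>{r*q+1..r*q+q}. int k \<in> S"
  shows "\<exists>x. kth_right S 0 m = Some x \<and> x \<le> int (q*m)"
proof -
  obtain e where e: "\<And>r. r < m \<Longrightarrow> e r \<in> {r*q+1..r*q+q} \<and> int (e r) \<in> S"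
    using hit by metis
  let ?A = "S \<inter> {1..int (q*m)}"
  have finA: "finite ?A" by auto
  have inj: "inj_on (\<lambda>r. int (e r)) {..<m}"
  proof (rule inj_onI)
    fix a b assume ab: "a \<in> {..<m}" "b \<in> {..<m}" "int (e a) = int (e b)"
    show "a = b"
    proof (rule ccontr)
      assume "a \<noteq> b"
      then consider "a < b" | "b < a" by linarith
      then show False
      proof cases
        case 1
        then have "a*q + q \<le> b*q" by (metis Suc_leI mult_Suc mult_le_mono1 add.commute)
        then show False using e[of a] e[of b] ab by auto
      next
        case 2
        then have "b*q + q \<le> a*q" by (metis Suc_leI mult_Suc mult_le_mono1 add.commute)
        then show False using e[of a] e[of b] ab by auto
      qed
    qed
  qed
  have sub: "(\<lambda>r. int (e r)) ` {..<m} \<subseteq> ?A"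
  proof
    fix z assume "z \<in> (\<lambda>r. int (e r)) ` {..<m}"
    then obtain r where r: "r < m" "z = int (e r)" by auto
    have "r*q + q \<le> q*m"
    proof -
      have "Suc r \<le> m" using r by simp
      then have "Suc r * q \<le> m * q" by (rule mult_le_mono1)
      then show ?thesis by (simp add: mult.commute)
    qed
    then have "e r \<le> q*m" using e[OF r(1)] by auto
    then have "int (e r) \<le> int (q*m)" by linarith
    then show "z \<in> ?A" using e[OF r(1)] r by auto
  qed
  have "m \<le> card ?A" using card_mono[OF finA sub] card_image[OF inj] by simp
  then obtain x where x: "x \<in> ?A" "card {y\<in>?A. y < x} = m - 1"
    using exists_kth[OF finA m] by blast
  have "{y\<in>?A. y < x} = {y \<in> S. 0 < y \<and> y < x}" using x(1) by auto
  then have "kth_right S 0 m = Some x" using x unfolding kr_char by auto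
  then show ?thesis using x(1) by auto
qed



abbreviation free_blk :: "int set \<Rightarrow> nat \<Rightarrow> nat \<Rightarrow> bool" where
  "free_blk S r q \<equiv> (\<forall>k\<in>{r*q+1..r*q+q}. int k \<notin> S)"

lemma Rv_bound:
  fixes S :: "int set"
  assumes m: "1 \<le> m"
  shows "Rv S m \<le> (\<Sum>q. of_nat m * (\<Sum>r<m. if free_blk S r q then 1 else 0 :: ennreal))"
proof -
  define f where "f q = of_nat m * (\<Sum>r<m. if free_blk S r q then 1 else 0 :: ennreal)" for q
  have fbig: "of_nat m \<le> f q" if h: "\<exists>r<m. free_blk S r q" for q
  proof -
    obtain r where r: "r < m" "free_blk S r q" using h by blast
    have "(1::ennreal) = (if free_blk S r q then 1 else 0)" using r by simp
    also have "\<dots> \<le> (\<Sum>r<m. if free_blk S r q then 1 else 0 :: ennreal)"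
      by (rule member_le_sum) (use r in auto)
    finally have "of_nat m * 1 \<le> of_nat m * (\<Sum>r<m. if free_blk S r q then 1 else 0 :: ennreal)"
      by (rule mult_left_mono) simp
    then show ?thesis unfolding f_def by simp
  qed
  have partial: "of_nat (n*m) \<le> suminf f" if "\<forall>q<n. \<exists>r<m. free_blk S r q" for n
  proof -
    have "of_nat (n*m) = (\<Sum>q<n. (of_nat m :: ennreal))" by simp
    also have "\<dots> \<le> (\<Sum>q<n. f q)" by (rule sum_mono) (use that fbig in auto)
    also have "\<dots> \<le> suminf f" by (rule sum_le_suminf) auto
    finally show ?thesis .
  qed
  have nofree: "\<exists>x. kth_right S 0 m = Some x \<and> x \<le> int (q*m)" if "\<not> (\<exists>r<m. free_blk S r q)" for q
    using block_lemma[OF m, of q S] that by blast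
  show ?thesis
  proof (cases "kth_right S 0 m")
    case None
    then have all: "\<forall>q. \<exists>r<m. free_blk S r q" using nofree by force
    have "suminf f = \<top>"
    proof (rule ccontr)
      assume "suminf f \<noteq> \<top>"
      then obtain n where n: "suminf f < of_nat n" using ennreal_Ex_less_of_nat top.not_eq_extremum by blast
      have "n \<le> n*m" using m by simp
      then have "(of_nat n :: ennreal) \<le> of_nat (n*m)" by (simp only: of_nat_le_iff)
      also have "\<dots> \<le> suminf f" using partial all by blast
      finally show False using n by simp
    qed
    then show ?thesis unfolding f_def by simp
  next
    case (Some x)
    then have xpos: "0 < x" unfolding kr_char by simp
    define n0 where "n0 = nat x"
    define Q where "Q = (n0 - 1) div m + 1"
    have a: "(n0-1) mod m < m" using m by simp
    have b: "(n0-1) div m * m + (n0-1) mod m = n0-1" by (rule div_mult_mod_eq)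
    have c: "Q*m = (n0-1) div m * m + m" unfolding Q_def by (simp add: algebra_simps)
    have "n0 - 1 < Q*m" using a b c by linarith
    then have n0Q: "n0 \<le> Q*m" by linarith
    have "\<forall>q<Q. \<exists>r<m. free_blk S r q"
    proof (intro allI impI, rule ccontr)
      fix q assume q: "q < Q" "\<not> (\<exists>r<m. free_blk S r q)"
      then obtain x' where "kth_right S 0 m = Some x'" "x' \<le> int (q*m)" using nofree by blast
      then have "x \<le> int (q*m)" using Some by simp
      moreover have "q*m \<le> ((n0 - 1) div m) * m" using q(1) unfolding Q_def by simp
      moreover have "((n0 - 1) div m) * m \<le> n0 - 1" using b by linarith
      ultimately show False using xpos unfolding n0_def by linarith
    qed
    then have "of_nat (Q*m) \<le> suminf f" by (rule partial)
    moreover have "Rv S m = of_nat n0" unfolding Rv_def Some n0_def using xpos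
      by (simp add: ennreal_of_nat_eq_real_of_nat)
    ultimately show ?thesis unfolding f_def using n0Q
      by (metis (no_types, lifting) of_nat_le_iff order_trans ennreal_of_nat_eq_real_of_nat ennreal_leI)
  qed
qed

lemma Rv_lower:
  fixes S :: "int set"
  shows "(\<Sum>n\<in>{0..N}. if (\<forall>k\<in>{1..n}. int k \<notin> S) then 1 else 0 :: ennreal) \<le> Rv S m"
proof (cases "kth_right S 0 m")
  case None then show ?thesis unfolding Rv_def by simp
next
  case (Some x)
  then have x: "x \<in> S" "0 < x" unfolding kr_char by auto
  define n0 where "n0 = nat x"
  have "(\<Sum>n\<in>{0..N}. if (\<forall>k\<in>{1..n}. int k \<notin> S) then 1 else 0 :: ennreal)
        \<le> (\<Sum>n\<in>{0..N}. if n < n0 then 1 else 0)"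
  proof (rule sum_mono)
    fix n assume "n \<in> {0..N}"
    show "(if (\<forall>k\<in>{1..n}. int k \<notin> S) then 1 else 0 :: ennreal) \<le> (if n < n0 then 1 else 0)"
    proof (cases "\<forall>k\<in>{1..n}. int k \<notin> S")
      case True
      have "n < n0"
      proof (rule ccontr)
        assume "\<not> n < n0"
        then have "n0 \<in> {1..n}" using x unfolding n0_def by auto
        moreover have "int n0 = x" using x unfolding n0_def by simp
        ultimately show False using True x by metis
      qed
      then show ?thesis by simp
    qed auto
  qed
  also have "\<dots> = (\<Sum>n\<in>{n\<in>{0..N}. n < n0}. 1)" by (rule sum.inter_filter[symmetric]) simp
  also have "\<dots> = of_nat (card {n\<in>{0..N}. n < n0})" by simp
  also have "\<dots> \<le> of_nat n0"
  proof -
    have "card {n\<in>{0..N}. n < n0} \<le> card {..<n0}" by (rule card_mono) auto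
    then show ?thesis by simp
  qed
  also have "\<dots> = Rv S m" unfolding Rv_def Some n0_def using x
      by (simp add: ennreal_of_nat_eq_real_of_nat)
  finally show ?thesis .
qed



lemma pr0: assumes "j \<le> D 0" shows "points_right D C j 0 \<longleftrightarrow> C j"
proof -
  have f: "first_nonneg (Gamma D j) = 0"
    unfolding first_nonneg_def Gamma_def by (rule Least_equality) (use assms in auto)
  have e: "{y \<in> Gamma D j. 0 \<le> y \<and> y < 0} = {}" by auto
  show ?thesis unfolding points_right_def Let_def f by (simp add: e)
qed

lemma stub_eq:
  "stub_edge_length D C j 0 = (if points_right D C j 0 then Rv (Gamma D j) (2*j-1)
      else Rv (uminus ` Gamma D j) (2*j-1))"
  unfolding stub_edge_length_def partner_def Rv_def kl_eq
  by (cases "kth_right (uminus ` Gamma D j) 0 (2*j-1)") auto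

lemma space_CT: "space (CT_space F) = UNIV"
  by (simp add: CT_space_def space_pair_measure space_PiM)

lemma CT_cyl:
  fixes F :: "nat pmf" and J :: "int set" and I :: "nat set" and X :: "int \<Rightarrow> nat set" and Y :: "nat \<Rightarrow> bool set"
  assumes J: "finite J" and I: "finite I"
  defines "E \<equiv> {\<omega>. (\<forall>i\<in>J. fst \<omega> i \<in> X i) \<and> (\<forall>i\<in>I. snd \<omega> i \<in> Y i)}"
  shows "E \<in> sets (CT_space F)"
    and "emeasure (CT_space F) E = (\<Prod>i\<in>J. emeasure (measure_pmf F) (X i)) *
                                   (\<Prod>i\<in>I. emeasure (measure_pmf (bernoulli_pmf (1/2))) (Y i))"
proof -
  interpret P1: product_prob_space "\<lambda>_::int. measure_pmf F" "UNIV::int set"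
    by unfold_locales
  interpret P2: product_prob_space "\<lambda>_::nat. measure_pmf (bernoulli_pmf (1/2))" "UNIV::nat set"
    by unfold_locales
  let ?M1 = "\<Pi>\<^sub>M i\<in>(UNIV::int set). measure_pmf F"
  let ?M2 = "\<Pi>\<^sub>M i\<in>(UNIV::nat set). measure_pmf (bernoulli_pmf (1/2))"
  define A where "A = {x\<in>space ?M1. \<forall>i\<in>J. x i \<in> X i}"
  define B where "B = {x\<in>space ?M2. \<forall>i\<in>I. x i \<in> Y i}"
  have E: "E = A \<times> B" unfolding E_def A_def B_def by (auto simp: space_PiM)
  have A: "A \<in> sets ?M1" unfolding A_def
    by (rule sets.sets_Collect_finite_All[OF _ J]) auto
  have B: "B \<in> sets ?M2" unfolding B_def
    by (rule sets.sets_Collect_finite_All[OF _ I]) auto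
  show "E \<in> sets (CT_space F)" unfolding E CT_space_def using A B by simp
  have "emeasure (CT_space F) E = emeasure ?M1 A * emeasure ?M2 B"
    unfolding E CT_space_def by (rule P2.P.emeasure_pair_measure_Times[OF A B])
  also have "emeasure ?M1 A = (\<Prod>i\<in>J. emeasure (measure_pmf F) (X i))"
    unfolding A_def by (rule P1.emeasure_PiM_Collect) (use J in auto)
  also have "emeasure ?M2 B = (\<Prod>i\<in>I. emeasure (measure_pmf (bernoulli_pmf (1/2))) (Y i))"
    unfolding B_def by (rule P2.emeasure_PiM_Collect) (use I in auto)
  finally show "emeasure (CT_space F) E = (\<Prod>i\<in>J. emeasure (measure_pmf F) (X i)) *
                                   (\<Prod>i\<in>I. emeasure (measure_pmf (bernoulli_pmf (1/2))) (Y i))" .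
qed



lemma CT_cyl1:
  fixes F :: "nat pmf" and J :: "int set" and X :: "int \<Rightarrow> nat set"
  assumes J: "finite J"
  shows "{\<omega>. \<forall>i\<in>J. fst \<omega> i \<in> X i} \<in> sets (CT_space F)"
    and "emeasure (CT_space F) {\<omega>. \<forall>i\<in>J. fst \<omega> i \<in> X i} = (\<Prod>i\<in>J. emeasure (measure_pmf F) (X i))"
  using CT_cyl[OF J finite.emptyI, where F=F and X=X and Y="\<lambda>_. UNIV"] by simp_all

definition Eblk :: "nat \<Rightarrow> int \<Rightarrow> nat \<Rightarrow> nat \<Rightarrow> ((int \<Rightarrow> nat) \<times> (nat \<Rightarrow> bool)) set" where
  "Eblk j s r q = {\<omega>. \<forall>i\<in>(\<lambda>k. s * int k) ` {r*q+1..r*q+q}. fst \<omega> i \<in> {..<j}}"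

lemma Eblk_sets: "Eblk j s r q \<in> sets (CT_space F)"
  unfolding Eblk_def by (rule CT_cyl1) simp

lemma Eblk_meas:
  assumes s: "s \<noteq> 0"
  shows "emeasure (CT_space F) (Eblk j s r q) = emeasure (measure_pmf F) {..<j} ^ q"
proof -
  have inj: "inj_on (\<lambda>k. s * int k) {r*q+1..r*q+q}" using s by (auto intro!: inj_onI)
  have "emeasure (CT_space F) (Eblk j s r q)
        = (\<Prod>i\<in>(\<lambda>k. s * int k) ` {r*q+1..r*q+q}. emeasure (measure_pmf F) {..<j})"
    unfolding Eblk_def by (rule CT_cyl1) simp
  also have "\<dots> = emeasure (measure_pmf F) {..<j} ^ q"
    using card_image[OF inj] by simp
  finally show ?thesis .
qed

lemma int_blk:
  assumes s: "s \<noteq> 0"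
  shows "(\<integral>\<^sup>+\<omega>. (\<Sum>q. of_nat m * (\<Sum>r<m. indicator (Eblk j s r q) \<omega>)) \<partial>CT_space F)
       = (\<Sum>q. of_nat m * (of_nat m * emeasure (measure_pmf F) {..<j} ^ q))"
proof -
  have meas: "(\<lambda>\<omega>. of_nat m * (\<Sum>r<m. indicator (Eblk j s r q) \<omega> :: ennreal)) \<in> borel_measurable (CT_space F)" for q
    using Eblk_sets by measurable
  have "(\<integral>\<^sup>+\<omega>. (\<Sum>q. of_nat m * (\<Sum>r<m. indicator (Eblk j s r q) \<omega>)) \<partial>CT_space F)
     = (\<Sum>q. \<integral>\<^sup>+\<omega>. of_nat m * (\<Sum>r<m. indicator (Eblk j s r q) \<omega>) \<partial>CT_space F)"
    by (rule nn_integral_suminf) (rule meas)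
  also have "\<dots> = (\<Sum>q. of_nat m * (of_nat m * emeasure (measure_pmf F) {..<j} ^ q))"
  proof (rule suminf_cong)
    fix q
    have "(\<integral>\<^sup>+\<omega>. of_nat m * (\<Sum>r<m. indicator (Eblk j s r q) \<omega>) \<partial>CT_space F)
        = of_nat m * (\<integral>\<^sup>+\<omega>. (\<Sum>r<m. indicator (Eblk j s r q) \<omega>) \<partial>CT_space F)"
      by (rule nn_integral_cmult) (use Eblk_sets in measurable)
    also have "(\<integral>\<^sup>+\<omega>. (\<Sum>r<m. indicator (Eblk j s r q) \<omega>) \<partial>CT_space F)
        = (\<Sum>r<m. \<integral>\<^sup>+\<omega>. indicator (Eblk j s r q) \<omega> \<partial>CT_space F)"
      by (rule nn_integral_sum) (use Eblk_sets in measurable)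
    also have "\<dots> = (\<Sum>r<m. emeasure (measure_pmf F) {..<j} ^ q)"
      using Eblk_sets Eblk_meas[OF s] by (simp add: nn_integral_indicator)
    finally show "(\<integral>\<^sup>+\<omega>. of_nat m * (\<Sum>r<m. indicator (Eblk j s r q) \<omega>) \<partial>CT_space F)
        = of_nat m * (of_nat m * emeasure (measure_pmf F) {..<j} ^ q)" by simp
  qed
  finally show ?thesis .
qed



definition Ubd :: "nat \<Rightarrow> (int \<Rightarrow> nat) \<times> (nat \<Rightarrow> bool) \<Rightarrow> ennreal" where
  "Ubd K \<omega> = \<top> * indicator {\<omega>. \<forall>i\<in>{0}. fst \<omega> i \<in> {K<..}} \<omega> +
     (\<Sum>j\<in>{1..K}. (\<Sum>q. of_nat (2*j-1) * (\<Sum>r<2*j-1. indicator (Eblk j 1 r q) \<omega>)) +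
                    (\<Sum>q. of_nat (2*j-1) * (\<Sum>r<2*j-1. indicator (Eblk j (-1) r q) \<omega>)))"

lemma free_pos: "(if free_blk (Gamma (fst \<omega>) j) r q then 1 else 0) = (indicator (Eblk j 1 r q) \<omega> :: ennreal)"
  by (auto simp: Eblk_def Gamma_def indicator_def not_le)

lemma free_neg: "(if free_blk (uminus ` Gamma (fst \<omega>) j) r q then 1 else 0) = (indicator (Eblk j (-1) r q) \<omega> :: ennreal)"
proof -
  have "int k \<notin> uminus ` Gamma (fst \<omega>) j \<longleftrightarrow> fst \<omega> (- int k) < j" for k
    by (auto simp: Gamma_def not_le image_iff)
  then show ?thesis by (auto simp: Eblk_def indicator_def)
qed

lemma CT_T_le_Ubd: "CT_T \<omega> \<le> Ubd K \<omega>"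
proof (cases "K < fst \<omega> 0")
  case True then show ?thesis unfolding Ubd_def by (simp add: indicator_def)
next
  case False
  let ?D = "fst \<omega>" and ?C = "snd \<omega>"
  define B where "B j = (\<Sum>q. of_nat (2*j-1) * (\<Sum>r<2*j-1. indicator (Eblk j 1 r q) \<omega>)) +
                    (\<Sum>q. of_nat (2*j-1) * (\<Sum>r<2*j-1. indicator (Eblk j (-1) r q) \<omega> :: ennreal))" for j
  have stubB: "stub_edge_length ?D ?C j 0 \<le> B j" if j: "1 \<le> j" for j
  proof -
    have m: "1 \<le> 2*j-1" using j by simp
    have R1: "Rv (Gamma ?D j) (2*j-1) \<le> (\<Sum>q. of_nat (2*j-1) * (\<Sum>r<2*j-1. indicator (Eblk j 1 r q) \<omega>))"
      using Rv_bound[OF m, of "Gamma ?D j"] unfolding free_pos .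
    have R2: "Rv (uminus ` Gamma ?D j) (2*j-1) \<le> (\<Sum>q. of_nat (2*j-1) * (\<Sum>r<2*j-1. indicator (Eblk j (-1) r q) \<omega>))"
      using Rv_bound[OF m, of "uminus ` Gamma ?D j"] unfolding free_neg .
    have X: "(\<Sum>q. of_nat (2*j-1) * (\<Sum>r<2*j-1. indicator (Eblk j 1 r q) \<omega>)) \<le> B j"
      unfolding B_def by (rule add_increasing2) simp_all
    have Y: "(\<Sum>q. of_nat (2*j-1) * (\<Sum>r<2*j-1. indicator (Eblk j (-1) r q) \<omega>)) \<le> B j"
      unfolding B_def by (rule add_increasing) simp_all
    show ?thesis unfolding stub_eq using order_trans[OF R1 X] order_trans[OF R2 Y] by simp
  qed
  have "CT_T \<omega> = (\<Sum>j\<in>{1..?D 0}. stub_edge_length ?D ?C j 0)" unfolding CT_T_def by simp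
  also have "\<dots> \<le> (\<Sum>j\<in>{1..?D 0}. B j)" by (rule sum_mono) (use stubB in auto)
  also have "\<dots> \<le> (\<Sum>j\<in>{1..K}. B j)" by (rule sum_mono2) (use False in auto)
  also have "\<dots> \<le> Ubd K \<omega>" unfolding Ubd_def B_def by simp
  finally show ?thesis .
qed

lemma geo_fin:
  assumes "0 \<le> a" "a < 1"
  shows "(\<Sum>q. of_nat m * (of_nat m * ennreal a ^ q)) < \<top>"
proof -
  have eq: "of_nat m * (of_nat m * ennreal a ^ q) = ennreal (real m * real m * a ^ q)" for q
    using assms by (simp add: ennreal_of_nat_eq_real_of_nat ennreal_power ennreal_mult'' mult.assoc)
  have sm: "summable (\<lambda>q. real m * real m * a ^ q)"
    using assms by (intro summable_mult summable_geometric) simp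
  have "(\<Sum>q. of_nat m * (of_nat m * ennreal a ^ q)) = ennreal (\<Sum>q. real m * real m * a ^ q)"
    unfolding eq using assms by (intro suminf_ennreal2 sm) simp
  then show ?thesis by simp
qed



lemma upper:
  fixes F :: "nat pmf"
  assumes K: "set_pmf F \<subseteq> {..K}" and a: "\<And>j. 1 \<le> j \<Longrightarrow> j \<le> K \<Longrightarrow> measure_pmf.prob F {..<j} < 1"
  shows "(\<integral>\<^sup>+ \<omega>. CT_T \<omega> \<partial>CT_space F) < \<infinity>"
proof -
  have s0: "{\<omega>. \<forall>i\<in>{0}. fst \<omega> i \<in> {K<..}} \<in> sets (CT_space F)" by (rule CT_cyl1) simp
  have e0: "emeasure (CT_space F) {\<omega>. \<forall>i\<in>{0}. fst \<omega> i \<in> {K<..}} = 0"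
  proof -
    have "emeasure (CT_space F) {\<omega>. \<forall>i\<in>{0::int}. fst \<omega> i \<in> {K<..}} = emeasure (measure_pmf F) {K<..}"
      using CT_cyl1(2)[of "{0::int}" F "\<lambda>_. {K<..}"] by simp
    also have "\<dots> = 0" using K by (auto simp: measure_pmf.emeasure_eq_measure measure_pmf_zero_iff)
    finally show ?thesis .
  qed
  have mB: "(\<lambda>\<omega>. (\<Sum>q. of_nat m * (\<Sum>r<m. indicator (Eblk j s r q) \<omega> :: ennreal))) \<in> borel_measurable (CT_space F)" for m j s
    by (rule borel_measurable_suminf_order) (use Eblk_sets in measurable)
  have m0: "(\<lambda>\<omega>. \<top> * indicator {\<omega>. \<forall>i\<in>{0}. fst \<omega> i \<in> {K<..}} \<omega> :: ennreal) \<in> borel_measurable (CT_space F)"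
    by (intro borel_measurable_times_ennreal borel_measurable_const borel_measurable_indicator s0)
  have i1: "(\<integral>\<^sup>+\<omega>. (\<Sum>q. of_nat m * (\<Sum>r<m. indicator (Eblk j 1 r q) \<omega>)) \<partial>CT_space F)
       = (\<Sum>q. of_nat m * (of_nat m * emeasure (measure_pmf F) {..<j} ^ q))" for m j
    by (rule int_blk) simp
  have i2: "(\<integral>\<^sup>+\<omega>. (\<Sum>q. of_nat m * (\<Sum>r<m. indicator (Eblk j (-1) r q) \<omega>)) \<partial>CT_space F)
       = (\<Sum>q. of_nat m * (of_nat m * emeasure (measure_pmf F) {..<j} ^ q))" for m j
    by (rule int_blk) simp
  have "(\<integral>\<^sup>+ \<omega>. CT_T \<omega> \<partial>CT_space F) \<le> (\<integral>\<^sup>+ \<omega>. Ubd K \<omega> \<partial>CT_space F)"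
    by (rule nn_integral_mono) (rule CT_T_le_Ubd)
  also have "\<dots> = (\<integral>\<^sup>+ \<omega>. \<top> * indicator {\<omega>. \<forall>i\<in>{0}. fst \<omega> i \<in> {K<..}} \<omega> \<partial>CT_space F) +
     (\<integral>\<^sup>+ \<omega>. (\<Sum>j\<in>{1..K}. (\<Sum>q. of_nat (2*j-1) * (\<Sum>r<2*j-1. indicator (Eblk j 1 r q) \<omega>)) +
                    (\<Sum>q. of_nat (2*j-1) * (\<Sum>r<2*j-1. indicator (Eblk j (-1) r q) \<omega>))) \<partial>CT_space F)"
    unfolding Ubd_def
    by (rule nn_integral_add, rule m0, intro borel_measurable_sum borel_measurable_add mB)
  also have "(\<integral>\<^sup>+ \<omega>. \<top> * indicator {\<omega>. \<forall>i\<in>{0}. fst \<omega> i \<in> {K<..}} \<omega> \<partial>CT_space F) = 0"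
    using s0 e0 by (simp add: nn_integral_cmult_indicator)
  also have "(\<integral>\<^sup>+ \<omega>. (\<Sum>j\<in>{1..K}. (\<Sum>q. of_nat (2*j-1) * (\<Sum>r<2*j-1. indicator (Eblk j 1 r q) \<omega>)) +
                    (\<Sum>q. of_nat (2*j-1) * (\<Sum>r<2*j-1. indicator (Eblk j (-1) r q) \<omega>))) \<partial>CT_space F)
     = (\<Sum>j\<in>{1..K}. (\<Sum>q. of_nat (2*j-1) * (of_nat (2*j-1) * emeasure (measure_pmf F) {..<j} ^ q)) +
                     (\<Sum>q. of_nat (2*j-1) * (of_nat (2*j-1) * emeasure (measure_pmf F) {..<j} ^ q)))"
  proof -
    have "(\<integral>\<^sup>+ \<omega>. (\<Sum>j\<in>{1..K}. (\<Sum>q. of_nat (2*j-1) * (\<Sum>r<2*j-1. indicator (Eblk j 1 r q) \<omega>)) +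
                    (\<Sum>q. of_nat (2*j-1) * (\<Sum>r<2*j-1. indicator (Eblk j (-1) r q) \<omega>))) \<partial>CT_space F)
      = (\<Sum>j\<in>{1..K}. (\<integral>\<^sup>+ \<omega>. (\<Sum>q. of_nat (2*j-1) * (\<Sum>r<2*j-1. indicator (Eblk j 1 r q) \<omega>)) +
                    (\<Sum>q. of_nat (2*j-1) * (\<Sum>r<2*j-1. indicator (Eblk j (-1) r q) \<omega>)) \<partial>CT_space F))"
      by (rule nn_integral_sum) (intro borel_measurable_add mB)
    also have "\<dots> = (\<Sum>j\<in>{1..K}. (\<integral>\<^sup>+ \<omega>. (\<Sum>q. of_nat (2*j-1) * (\<Sum>r<2*j-1. indicator (Eblk j 1 r q) \<omega>)) \<partial>CT_space F) +
                    (\<integral>\<^sup>+ \<omega>. (\<Sum>q. of_nat (2*j-1) * (\<Sum>r<2*j-1. indicator (Eblk j (-1) r q) \<omega>)) \<partial>CT_space F))"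
      by (rule sum.cong[OF refl], rule nn_integral_add) (rule mB)+
    also have "\<dots> = (\<Sum>j\<in>{1..K}. (\<Sum>q. of_nat (2*j-1) * (of_nat (2*j-1) * emeasure (measure_pmf F) {..<j} ^ q)) +
                     (\<Sum>q. of_nat (2*j-1) * (of_nat (2*j-1) * emeasure (measure_pmf F) {..<j} ^ q)))"
      by (simp only: i1 i2)
    finally show ?thesis .
  qed
  also have "0 + (\<Sum>j\<in>{1..K}. (\<Sum>q. of_nat (2*j-1) * (of_nat (2*j-1) * emeasure (measure_pmf F) {..<j} ^ q)) +
                     (\<Sum>q. of_nat (2*j-1) * (of_nat (2*j-1) * emeasure (measure_pmf F) {..<j} ^ q))) < \<top>"
  proof -
    have "(\<Sum>q. of_nat (2*j-1) * (of_nat (2*j-1) * emeasure (measure_pmf F) {..<j} ^ q)) < \<top>"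
      if "j \<in> {1..K}" for j
      using geo_fin[of "measure_pmf.prob F {..<j}" "2*j-1"] a[of j] that
      by (simp add: measure_pmf.emeasure_eq_measure)
    then show ?thesis by (simp add: ennreal_sum_less_top ennreal_add_less_top)
  qed
  finally show ?thesis by simp
qed



definition Elow :: "nat \<Rightarrow> nat \<Rightarrow> ((int \<Rightarrow> nat) \<times> (nat \<Rightarrow> bool)) set" where
  "Elow j n = {\<omega>. (\<forall>i\<in>insert 0 (int ` {1..n}). fst \<omega> i \<in> (if i = 0 then {j..} else {..<j})) \<and>
                   (\<forall>i\<in>{j}. snd \<omega> i \<in> {True})}"

definition Lbd :: "nat \<Rightarrow> nat \<Rightarrow> (int \<Rightarrow> nat) \<times> (nat \<Rightarrow> bool) \<Rightarrow> ennreal" where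
  "Lbd J N \<omega> = (\<Sum>j\<in>{1..J}. \<Sum>n<N. indicator (Elow j n) \<omega>)"

lemma Elow_sets: "Elow j n \<in> sets (CT_space F)"
  unfolding Elow_def by (rule CT_cyl) simp_all

lemma Elow_meas: "emeasure (CT_space F) (Elow j n) =
   emeasure (measure_pmf F) {j..} * emeasure (measure_pmf F) {..<j} ^ n * ennreal (1/2)"
proof -
  have "emeasure (CT_space F) (Elow j n) =
     (\<Prod>i\<in>insert 0 (int ` {1..n}). emeasure (measure_pmf F) (if i = 0 then {j..} else {..<j})) *
     (\<Prod>i\<in>{j}. emeasure (measure_pmf (bernoulli_pmf (1/2))) {True})"
    unfolding Elow_def by (rule CT_cyl) simp_all
  also have "(\<Prod>i\<in>insert 0 (int ` {1..n}). emeasure (measure_pmf F) (if i = 0 then {j..} else {..<j}))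
      = emeasure (measure_pmf F) {j..} * (\<Prod>i\<in>int ` {1..n}. emeasure (measure_pmf F) (if i = 0 then {j..} else {..<j}))"
    by (subst prod.insert) auto
  also have "(\<Prod>i\<in>int ` {1..n}. emeasure (measure_pmf F) (if i = 0 then {j..} else {..<j}))
      = (\<Prod>i\<in>int ` {1..n}. emeasure (measure_pmf F) {..<j})"
    by (rule prod.cong) auto
  also have "\<dots> = emeasure (measure_pmf F) {..<j} ^ n"
    by (simp add: card_image)
  also have "(\<Prod>i\<in>{j}. emeasure (measure_pmf (bernoulli_pmf (1/2))) {True}) = ennreal (1/2)"
    by (simp add: emeasure_pmf_single)
  finally show ?thesis .
qed

lemma Lbd_le: "Lbd J N \<omega> \<le> CT_T \<omega>"
proof -
  let ?D = "fst \<omega>" and ?C = "snd \<omega>"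
  define g where "g j = (\<Sum>n<N. indicator (Elow j n) \<omega> :: ennreal)" for j
  have gle: "g j \<le> (if j \<le> ?D 0 then stub_edge_length ?D ?C j 0 else 0)" if j: "1 \<le> j" for j
  proof (cases "j \<le> ?D 0 \<and> ?C j")
    case True
    have ind: "indicator (Elow j n) \<omega> = (if (\<forall>k\<in>{1..n}. int k \<notin> Gamma ?D j) then 1 else (0::ennreal))" for n
      using True by (auto simp: Elow_def Gamma_def indicator_def not_le)
    have "g j \<le> (\<Sum>n\<in>{0..N}. if (\<forall>k\<in>{1..n}. int k \<notin> Gamma ?D j) then 1 else (0::ennreal))"
      unfolding g_def ind by (rule sum_mono2) auto
    also have "\<dots> \<le> Rv (Gamma ?D j) (2*j-1)" by (rule Rv_lower)
    also have "\<dots> = stub_edge_length ?D ?C j 0" unfolding stub_eq using pr0[of j ?D ?C] True by simp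
    finally show ?thesis using True by simp
  next
    case False
    then have "indicator (Elow j n) \<omega> = (0::ennreal)" for n
      by (auto simp: Elow_def indicator_def)
    then show ?thesis unfolding g_def by simp
  qed
  have "Lbd J N \<omega> = (\<Sum>j\<in>{1..J}. g j)" unfolding Lbd_def g_def by simp
  also have "\<dots> \<le> (\<Sum>j\<in>{1..J}. if j \<le> ?D 0 then stub_edge_length ?D ?C j 0 else 0)"
    by (rule sum_mono) (use gle in auto)
  also have "\<dots> = (\<Sum>j\<in>{j\<in>{1..J}. j \<le> ?D 0}. stub_edge_length ?D ?C j 0)"
    by (rule sum.inter_filter[symmetric]) simp
  also have "\<dots> \<le> (\<Sum>j\<in>{1..?D 0}. stub_edge_length ?D ?C j 0)"
    by (rule sum_mono2) auto
  also have "\<dots> = CT_T \<omega>" unfolding CT_T_def by simp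
  finally show ?thesis .
qed

lemma int_Lbd: "(\<integral>\<^sup>+\<omega>. Lbd J N \<omega> \<partial>CT_space F) =
  (\<Sum>j\<in>{1..J}. \<Sum>n<N. emeasure (measure_pmf F) {j..} * emeasure (measure_pmf F) {..<j} ^ n * ennreal (1/2))"
proof -
  have mi: "(\<lambda>\<omega>. indicator (Elow j n) \<omega> :: ennreal) \<in> borel_measurable (CT_space F)" for j n
    by (intro borel_measurable_indicator Elow_sets)
  have "(\<integral>\<^sup>+\<omega>. Lbd J N \<omega> \<partial>CT_space F) = (\<Sum>j\<in>{1..J}. \<integral>\<^sup>+\<omega>. (\<Sum>n<N. indicator (Elow j n) \<omega>) \<partial>CT_space F)"
    unfolding Lbd_def by (rule nn_integral_sum) (intro borel_measurable_sum mi)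
  also have "\<dots> = (\<Sum>j\<in>{1..J}. \<Sum>n<N. \<integral>\<^sup>+\<omega>. indicator (Elow j n) \<omega> \<partial>CT_space F)"
    by (rule sum.cong[OF refl], rule nn_integral_sum) (rule mi)
  also have "\<dots> = (\<Sum>j\<in>{1..J}. \<Sum>n<N. emeasure (measure_pmf F) {j..} * emeasure (measure_pmf F) {..<j} ^ n * ennreal (1/2))"
    by (simp only: nn_integral_indicator[OF Elow_sets] Elow_meas)
  finally show ?thesis .
qed



lemma term_bound:
  fixes p a :: real
  assumes p: "0 \<le> p" "p + a = 1" "0 \<le> a" and aN: "a ^ N \<le> 1/2"
  shows "ennreal (1/4) \<le> (\<Sum>n<N. ennreal p * ennreal a ^ n * ennreal (1/2))"
proof -
  have "(\<Sum>n<N. ennreal p * ennreal a ^ n * ennreal (1/2)) = (\<Sum>n<N. ennreal (p * a ^ n * (1/2)))"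
  proof (rule sum.cong[OF refl])
    fix n
    have "ennreal a ^ n = ennreal (a^n)" using p(3) by (rule ennreal_power)
    moreover have "ennreal p * ennreal (a^n) = ennreal (p * a^n)"
      by (rule ennreal_mult[symmetric]) (use p in simp_all)
    moreover have "ennreal (p*a^n) * ennreal (1/2) = ennreal (p*a^n*(1/2))"
      by (rule ennreal_mult[symmetric]) (use p in simp_all)
    ultimately show "ennreal p * ennreal a ^ n * ennreal (1/2) = ennreal (p * a ^ n * (1/2))" by simp
  qed
  also have "\<dots> = ennreal (\<Sum>n<N. p * a ^ n * (1/2))"
    using p by (intro sum_ennreal) simp
  also have "(\<Sum>n<N. p * a ^ n * (1/2)) = (1 - a ^ N) / 2"
  proof -
    have "(\<Sum>n<N. p * a ^ n * (1/2)) = p * (\<Sum>n<N. a ^ n) / 2"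
      by (simp add: sum_distrib_left sum_divide_distrib)
    moreover have "p = 1 - a" using p by simp
    ultimately show ?thesis using one_diff_power_eq[of a N] by simp
  qed
  finally show ?thesis using aN by (simp add: ennreal_leI)
qed

theorem corollary2p2:
  fixes F :: "nat pmf"
  shows "(\<integral>\<^sup>+ \<omega>. CT_T \<omega> \<partial>CT_space F) < \<infinity> \<longleftrightarrow> (\<exists>K::nat. set_pmf F \<subseteq> {..K})"
proof
  define p where "p j = measure_pmf.prob F {j..}" for j
  define a where "a j = measure_pmf.prob F {..<j}" for j
  have pa: "p j + a j = 1" for j
  proof -
    have "{..<j} = space (measure_pmf F) - {j..}" by auto
    then have "a j = 1 - p j" unfolding a_def p_def using measure_pmf.prob_compl[of "{j..}" F] by simp
    then show ?thesis by simp
  qed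
  have ep: "emeasure (measure_pmf F) {j..} = ennreal (p j)" for j
    unfolding p_def by (simp add: measure_pmf.emeasure_eq_measure)
  have ea: "emeasure (measure_pmf F) {..<j} = ennreal (a j)" for j
    unfolding a_def by (simp add: measure_pmf.emeasure_eq_measure)
  {
    assume fin: "(\<integral>\<^sup>+ \<omega>. CT_T \<omega> \<partial>CT_space F) < \<infinity>"
    show "\<exists>K::nat. set_pmf F \<subseteq> {..K}"
    proof (rule ccontr)
      assume unb: "\<not> (\<exists>K::nat. set_pmf F \<subseteq> {..K})"
      have ppos: "0 < p J" for J
      proof -
        have "\<not> set_pmf F \<subseteq> {..J}" using unb by blast
        then obtain k where k: "k \<in> set_pmf F" "J \<le> k" by (auto simp: subset_iff not_le intro: less_imp_le)
        then show ?thesis unfolding p_def by (intro measure_pmf_posI[OF k(1)]) simp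
      qed
      have big: "ennreal (real J / 4) \<le> (\<integral>\<^sup>+ \<omega>. CT_T \<omega> \<partial>CT_space F)" for J
      proof -
        have "a J < 1" using ppos[of J] pa[of J] by simp
        then obtain N where N: "a J ^ N < 1/2" using real_arch_pow_inv[of "1/2" "a J"] by auto
        have "(\<Sum>j\<in>{1..J}. ennreal (1/4)) = of_nat J * ennreal (1/4)" by simp
        also have "\<dots> = ennreal (real J * (1/4))"
          by (simp only: ennreal_of_nat_eq_real_of_nat) (rule ennreal_mult[symmetric], simp_all)
        finally have "ennreal (real J / 4) = (\<Sum>j\<in>{1..J}. ennreal (1/4))" by simp
        also have "\<dots> \<le> (\<Sum>j\<in>{1..J}. \<Sum>n<N. emeasure (measure_pmf F) {j..} * emeasure (measure_pmf F) {..<j} ^ n * ennreal (1/2))"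
        proof (rule sum_mono)
          fix j assume j: "j \<in> {1..J}"
          have a0: "0 \<le> a j" unfolding a_def by simp
          have "a j \<le> a J" unfolding a_def using j
            by (intro measure_pmf.finite_measure_mono) auto
          then have "a j ^ N \<le> a J ^ N" using a0 by (intro power_mono)
          then have "a j ^ N \<le> 1/2" using N by simp
          then show "ennreal (1/4) \<le> (\<Sum>n<N. emeasure (measure_pmf F) {j..} * emeasure (measure_pmf F) {..<j} ^ n * ennreal (1/2))"
            unfolding ep ea using term_bound[of "p j" "a j" N] pa[of j] a0 ppos[of j] by simp
        qed
        also have "\<dots> = (\<integral>\<^sup>+\<omega>. Lbd J N \<omega> \<partial>CT_space F)" by (rule int_Lbd[symmetric])
        also have "\<dots> \<le> (\<integral>\<^sup>+ \<omega>. CT_T \<omega> \<partial>CT_space F)" by (rule nn_integral_mono) (rule Lbd_le)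
        finally show ?thesis .
      qed
      obtain n where n: "(\<integral>\<^sup>+ \<omega>. CT_T \<omega> \<partial>CT_space F) < of_nat n"
        using ennreal_Ex_less_of_nat fin by auto
      have "(of_nat n :: ennreal) = ennreal (real (4*n) / 4)"
        by (simp add: ennreal_of_nat_eq_real_of_nat)
      then show False using big[of "4*n"] n by simp
    qed
  }
  {
    assume "\<exists>K::nat. set_pmf F \<subseteq> {..K}"
    then obtain K0 where K0: "set_pmf F \<subseteq> {..K0}" by blast
    have finS: "finite (set_pmf F)" using K0 finite_subset by blast
    define K where "K = Max (set_pmf F)"
    have Kin: "K \<in> set_pmf F" unfolding K_def using finS set_pmf_not_empty by (rule Max_in)
    have K: "set_pmf F \<subseteq> {..K}" unfolding K_def using finS by auto
    have "measure_pmf.prob F {..<j} < 1" if "1 \<le> j" "j \<le> K" for j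
    proof -
      have "0 < p j" unfolding p_def by (rule measure_pmf_posI[OF Kin]) (use that in simp)
      then show ?thesis using pa[of j] unfolding a_def by simp
    qed
    then show "(\<integral>\<^sup>+ \<omega>. CT_T \<omega> \<partial>CT_space F) < \<infinity>" by (rule upper[OF K])
  }
qed

end
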